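(* If $(A,S)$ is a $\mathbb B_2$-contraction on a Hilbert space, then $(A,S,0)$ is a $\mathbb P$-contraction.
   Context: The pentablock is $\mathbb P=\{(a_{21},\operatorname{tr}A_0,\det A_0): A_0=[a_{ij}]\in M_2(\mathbb C),\ \|A_0\|<1\}\subset\mathbb C^3$; $\overline{\mathbb B}_2$ is the closed Euclidean unit ball of $\mathbb C^2$. A compact $K$ is a spectral set for a commuting tuple if its Taylor joint spectrum lies in $K$ and $\|f(\underline T)\|\le\sup_K|f|$ for every rational $f$ with no poles in $K$. A $\mathbb B_2$-contraction (resp. $\mathbb P$-contraction) is a commuting pair (resp. triple) having $\overline{\mathbb B}_2$ (resp. $\overline{\mathbb P}$) as a spectral set. *)

theory Defs
  imports "HOL-Analysis.Analysis"
begin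

text \<open>A complex Hilbert space H is modelled as a real Hilbert space (a type of class
real_inner and complete_space) together with an orthogonal operator J with J o J = -1,
which realises multiplication by the imaginary unit. Bounded complex-linear operators
on H are exactly the bounded real-linear operators commuting with J; the operator norm
is the same as the real one.\<close>

definition complex_structure :: "('h::{real_inner,complete_space} \<Rightarrow>\<^sub>L 'h) \<Rightarrow> bool" where
  "complex_structure J \<longleftrightarrow>
     J o\<^sub>L J = - id_blinfun \<and> (\<forall>x y. inner (J x) (J y) = inner x y)"

definition cscal :: "('h::real_normed_vector \<Rightarrow>\<^sub>L 'h) \<Rightarrow> complex \<Rightarrow> ('h \<Rightarrow>\<^sub>L 'h)" where
  "cscal J c = Re c *\<^sub>R id_blinfun + Im c *\<^sub>R J"

definition clinear_op :: "('h::real_normed_vector \<Rightarrow>\<^sub>L 'h) \<Rightarrow> ('h \<Rightarrow>\<^sub>L 'h) \<Rightarrow> bool" where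
  "clinear_op J T \<longleftrightarrow> T o\<^sub>L J = J o\<^sub>L T"

definition op_pow :: "('h::real_normed_vector \<Rightarrow>\<^sub>L 'h) \<Rightarrow> nat \<Rightarrow> ('h \<Rightarrow>\<^sub>L 'h)" where
  "op_pow T n = ((\<lambda>X. T o\<^sub>L X) ^^ n) id_blinfun"

definition commuting_pair :: "('h::real_normed_vector \<Rightarrow>\<^sub>L 'h) \<Rightarrow> ('h \<Rightarrow>\<^sub>L 'h) \<Rightarrow> ('h \<Rightarrow>\<^sub>L 'h) \<Rightarrow> bool" where
  "commuting_pair J T1 T2 \<longleftrightarrow> clinear_op J T1 \<and> clinear_op J T2 \<and> T1 o\<^sub>L T2 = T2 o\<^sub>L T1"

definition commuting_triple :: "('h::real_normed_vector \<Rightarrow>\<^sub>L 'h) \<Rightarrow> ('h \<Rightarrow>\<^sub>L 'h) \<Rightarrow> ('h \<Rightarrow>\<^sub>L 'h) \<Rightarrow> ('h \<Rightarrow>\<^sub>L 'h) \<Rightarrow> bool" where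
  "commuting_triple J T1 T2 T3 \<longleftrightarrow> clinear_op J T1 \<and> clinear_op J T2 \<and> clinear_op J T3 \<and>
     T1 o\<^sub>L T2 = T2 o\<^sub>L T1 \<and> T1 o\<^sub>L T3 = T3 o\<^sub>L T1 \<and> T2 o\<^sub>L T3 = T3 o\<^sub>L T2"

text \<open>Koszul complex of a commuting pair (A,B):
  0 -> H -> H^2 -> H -> 0,  x |-> (A x, B x),  (y,z) |-> B y - A z.\<close>
definition koszul_exact2 :: "('h::real_normed_vector \<Rightarrow> 'h) \<Rightarrow> ('h \<Rightarrow> 'h) \<Rightarrow> bool" where
  "koszul_exact2 A B \<longleftrightarrow>
     (\<forall>x. A x = 0 \<and> B x = 0 \<longrightarrow> x = 0) \<and>
     (\<forall>y z. B y - A z = 0 \<longrightarrow> (\<exists>x. y = A x \<and> z = B x)) \<and>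
     (\<forall>w. \<exists>y z. w = B y - A z)"

text \<open>Koszul complex of a commuting triple (A,B,C):
  0 -> H -> H^3 -> H^3 -> H -> 0 with
  d0 x = (A x, B x, C x),
  d1 (u,v,w) = (B u - A v, C u - A w, C v - B w),
  d2 (p,q,r) = C p - B q + A r.\<close>
definition koszul_exact3 :: "('h::real_normed_vector \<Rightarrow> 'h) \<Rightarrow> ('h \<Rightarrow> 'h) \<Rightarrow> ('h \<Rightarrow> 'h) \<Rightarrow> bool" where
  "koszul_exact3 A B C \<longleftrightarrow>
     (\<forall>x. A x = 0 \<and> B x = 0 \<and> C x = 0 \<longrightarrow> x = 0) \<and>
     (\<forall>u v w. B u - A v = 0 \<and> C u - A w = 0 \<and> C v - B w = 0 \<longrightarrow>
        (\<exists>x. u = A x \<and> v = B x \<and> w = C x)) \<and>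
     (\<forall>p q r. C p - B q + A r = 0 \<longrightarrow>
        (\<exists>u v w. p = B u - A v \<and> q = C u - A w \<and> r = C v - B w)) \<and>
     (\<forall>s. \<exists>p q r. s = C p - B q + A r)"

definition taylor_spectrum2 ::
  "('h::real_normed_vector \<Rightarrow>\<^sub>L 'h) \<Rightarrow> ('h \<Rightarrow>\<^sub>L 'h) \<Rightarrow> ('h \<Rightarrow>\<^sub>L 'h) \<Rightarrow> (complex \<times> complex) set" where
  "taylor_spectrum2 J T1 T2 =
     {(z1, z2). \<not> koszul_exact2 (blinfun_apply (T1 - cscal J z1)) (blinfun_apply (T2 - cscal J z2))}"

definition taylor_spectrum3 ::
  "('h::real_normed_vector \<Rightarrow>\<^sub>L 'h) \<Rightarrow> ('h \<Rightarrow>\<^sub>L 'h) \<Rightarrow> ('h \<Rightarrow>\<^sub>L 'h) \<Rightarrow> ('h \<Rightarrow>\<^sub>L 'h)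
     \<Rightarrow> (complex \<times> complex \<times> complex) set" where
  "taylor_spectrum3 J T1 T2 T3 =
     {(z1, z2, z3). \<not> koszul_exact3 (blinfun_apply (T1 - cscal J z1))
        (blinfun_apply (T2 - cscal J z2)) (blinfun_apply (T3 - cscal J z3))}"

definition poly2_eval :: "(nat \<times> nat \<Rightarrow> complex) \<Rightarrow> complex \<times> complex \<Rightarrow> complex" where
  "poly2_eval c z = (\<Sum>(i,j)\<in>{k. c k \<noteq> 0}. c (i,j) * fst z ^ i * snd z ^ j)"

definition poly3_eval :: "(nat \<times> nat \<times> nat \<Rightarrow> complex) \<Rightarrow> complex \<times> complex \<times> complex \<Rightarrow> complex" where
  "poly3_eval c z = (\<Sum>(i,j,k)\<in>{m. c m \<noteq> 0}.
      c (i,j,k) * fst z ^ i * fst (snd z) ^ j * snd (snd z) ^ k)"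

definition poly2_op :: "('h::real_normed_vector \<Rightarrow>\<^sub>L 'h) \<Rightarrow> (nat \<times> nat \<Rightarrow> complex)
     \<Rightarrow> ('h \<Rightarrow>\<^sub>L 'h) \<Rightarrow> ('h \<Rightarrow>\<^sub>L 'h) \<Rightarrow> ('h \<Rightarrow>\<^sub>L 'h)" where
  "poly2_op J c T1 T2 = (\<Sum>(i,j)\<in>{k. c k \<noteq> 0}.
      cscal J (c (i,j)) o\<^sub>L op_pow T1 i o\<^sub>L op_pow T2 j)"

definition poly3_op :: "('h::real_normed_vector \<Rightarrow>\<^sub>L 'h) \<Rightarrow> (nat \<times> nat \<times> nat \<Rightarrow> complex)
     \<Rightarrow> ('h \<Rightarrow>\<^sub>L 'h) \<Rightarrow> ('h \<Rightarrow>\<^sub>L 'h) \<Rightarrow> ('h \<Rightarrow>\<^sub>L 'h) \<Rightarrow> ('h \<Rightarrow>\<^sub>L 'h)" where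
  "poly3_op J c T1 T2 T3 = (\<Sum>(i,j,k)\<in>{m. c m \<noteq> 0}.
      cscal J (c (i,j,k)) o\<^sub>L op_pow T1 i o\<^sub>L op_pow T2 j o\<^sub>L op_pow T3 k)"

text \<open>K is a spectral set for the commuting tuple: the Taylor spectrum lies in K, and for
every rational function f = p/q with q zero-free on K, f(T) = p(T) q(T)^{-1} is defined
(q(T) invertible) and has norm at most sup over K of |f|.\<close>
definition spectral_set2 :: "(complex \<times> complex) set \<Rightarrow> ('h::{real_inner,complete_space} \<Rightarrow>\<^sub>L 'h)
     \<Rightarrow> ('h \<Rightarrow>\<^sub>L 'h) \<Rightarrow> ('h \<Rightarrow>\<^sub>L 'h) \<Rightarrow> bool" where
  "spectral_set2 K J T1 T2 \<longleftrightarrow>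
     taylor_spectrum2 J T1 T2 \<subseteq> K \<and>
     (\<forall>p q. finite {k. p k \<noteq> 0} \<and> finite {k. q k \<noteq> 0} \<and> (\<forall>z\<in>K. poly2_eval q z \<noteq> 0) \<longrightarrow>
        (\<exists>R. R o\<^sub>L poly2_op J q T1 T2 = id_blinfun \<and> poly2_op J q T1 T2 o\<^sub>L R = id_blinfun \<and>
             norm (poly2_op J p T1 T2 o\<^sub>L R) \<le> (SUP z\<in>K. cmod (poly2_eval p z / poly2_eval q z))))"

definition spectral_set3 :: "(complex \<times> complex \<times> complex) set \<Rightarrow> ('h::{real_inner,complete_space} \<Rightarrow>\<^sub>L 'h)
     \<Rightarrow> ('h \<Rightarrow>\<^sub>L 'h) \<Rightarrow> ('h \<Rightarrow>\<^sub>L 'h) \<Rightarrow> ('h \<Rightarrow>\<^sub>L 'h) \<Rightarrow> bool" where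
  "spectral_set3 K J T1 T2 T3 \<longleftrightarrow>
     taylor_spectrum3 J T1 T2 T3 \<subseteq> K \<and>
     (\<forall>p q. finite {k. p k \<noteq> 0} \<and> finite {k. q k \<noteq> 0} \<and> (\<forall>z\<in>K. poly3_eval q z \<noteq> 0) \<longrightarrow>
        (\<exists>R. R o\<^sub>L poly3_op J q T1 T2 T3 = id_blinfun \<and> poly3_op J q T1 T2 T3 o\<^sub>L R = id_blinfun \<and>
             norm (poly3_op J p T1 T2 T3 o\<^sub>L R) \<le> (SUP z\<in>K. cmod (poly3_eval p z / poly3_eval q z))))"

definition closed_ball2 :: "(complex \<times> complex) set" where
  "closed_ball2 = {(z1, z2). (cmod z1)\<^sup>2 + (cmod z2)\<^sup>2 \<le> 1}"

definition mat_norm2 :: "complex^2^2 \<Rightarrow> real" where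
  "mat_norm2 A = onorm (\<lambda>x. A *v x)"

definition pentablock :: "(complex \<times> complex \<times> complex) set" where
  "pentablock = {(A $ 2 $ 1, A $ 1 $ 1 + A $ 2 $ 2, det A) | A. mat_norm2 A < 1}"

definition B2_contraction :: "('h::{real_inner,complete_space} \<Rightarrow>\<^sub>L 'h) \<Rightarrow> ('h \<Rightarrow>\<^sub>L 'h) \<Rightarrow> ('h \<Rightarrow>\<^sub>L 'h) \<Rightarrow> bool" where
  "B2_contraction J T1 T2 \<longleftrightarrow> commuting_pair J T1 T2 \<and> spectral_set2 closed_ball2 J T1 T2"

definition P_contraction :: "('h::{real_inner,complete_space} \<Rightarrow>\<^sub>L 'h) \<Rightarrow> ('h \<Rightarrow>\<^sub>L 'h) \<Rightarrow> ('h \<Rightarrow>\<^sub>L 'h) \<Rightarrow> ('h \<Rightarrow>\<^sub>L 'h) \<Rightarrow> bool" where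
  "P_contraction J T1 T2 T3 \<longleftrightarrow> commuting_triple J T1 T2 T3 \<and> spectral_set3 (closure pentablock) J T1 T2 T3"

end

theory Submission
  imports Defs
begin

lemma cscal_apply: "blinfun_apply (cscal J c) x = Re c *\<^sub>R x + Im c *\<^sub>R J x"
  by (simp add: cscal_def blinfun.add_left blinfun.scaleR_left)

lemma vec_ident:
  fixes x y :: "'a::real_vector"
  shows "a *\<^sub>R (c *\<^sub>R x + d *\<^sub>R y) + b *\<^sub>R (c *\<^sub>R y + d *\<^sub>R - x) = (a*c - b*d) *\<^sub>R x + (a*d + b*c) *\<^sub>R y"
  by (simp add: algebra_simps)

lemma cscal_mult:
  assumes "complex_structure J"
  shows "cscal J z o\<^sub>L cscal J w = cscal J (z * w)"
proof (rule blinfun_eqI)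
  fix x
  have JJ: "J (J y) = - y" for y
  proof -
    have "(J o\<^sub>L J) y = (- id_blinfun) y" using assms by (simp add: complex_structure_def)
    then show ?thesis by (simp add: blinfun.minus_left)
  qed
  have JJx: "J (J x) = - x" by (rule JJ)
  have "blinfun_apply (cscal J z o\<^sub>L cscal J w) x = cscal J z (cscal J w x)" by simp
  also have "\<dots> = Re z *\<^sub>R (Re w *\<^sub>R x + Im w *\<^sub>R J x) + Im z *\<^sub>R J (Re w *\<^sub>R x + Im w *\<^sub>R J x)"
    by (simp only: cscal_apply)
  also have "\<dots> = Re z *\<^sub>R (Re w *\<^sub>R x + Im w *\<^sub>R J x) + Im z *\<^sub>R (Re w *\<^sub>R J x + Im w *\<^sub>R - x)"
    by (simp only: blinfun.add_right blinfun.scaleR_right JJx)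
  also have "\<dots> = (Re z * Re w - Im z * Im w) *\<^sub>R x + (Re z * Im w + Im z * Re w) *\<^sub>R J x"
    by (rule vec_ident)
  also have "\<dots> = blinfun_apply (cscal J (z * w)) x" by (simp add: cscal_apply)
  finally show "blinfun_apply (cscal J z o\<^sub>L cscal J w) x = blinfun_apply (cscal J (z * w)) x" .
qed

lemma cscal_one: "cscal J 1 = id_blinfun"
  unfolding cscal_def by (simp only: one_complex.sel scaleR_one scaleR_zero_left add_0_right)

lemma cscal_zero: "cscal J 0 = 0"
  unfolding cscal_def by (simp only: zero_complex.sel scaleR_zero_left add_0_right)

lemma cscal_comm:
  assumes "clinear_op J T"
  shows "T o\<^sub>L cscal J z = cscal J z o\<^sub>L T"
proof (rule blinfun_eqI)
  fix x
  have "T (J x) = J (T x)" using assms unfolding clinear_op_def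
    by (metis blinfun_apply_blinfun_compose)
  then show "blinfun_apply (T o\<^sub>L cscal J z) x = blinfun_apply (cscal J z o\<^sub>L T) x"
    by (simp add: cscal_apply blinfun.add_right blinfun.scaleR_right)
qed

lemma koszul3_inv:
  fixes A B C D :: "'h::real_normed_vector \<Rightarrow>\<^sub>L 'h"
  assumes CD: "\<And>x. C (D x) = x" and DC: "\<And>x. D (C x) = x"
    and AC: "\<And>x. A (C x) = C (A x)" and BC: "\<And>x. B (C x) = C (B x)"
  shows "koszul_exact3 (blinfun_apply A) (blinfun_apply B) (blinfun_apply C)"
proof -
  have AD: "A (D x) = D (A x)" for x
  proof -
    have "A (D x) = D (C (A (D x)))" by (simp only: DC)
    also have "\<dots> = D (A (C (D x)))" by (simp only: AC)
    also have "\<dots> = D (A x)" by (simp only: CD)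
    finally show ?thesis .
  qed
  have BD: "B (D x) = D (B x)" for x
  proof -
    have "B (D x) = D (C (B (D x)))" by (simp only: DC)
    also have "\<dots> = D (B (C (D x)))" by (simp only: BC)
    also have "\<dots> = D (B x)" by (simp only: CD)
    finally show ?thesis .
  qed
  show ?thesis unfolding koszul_exact3_def
  proof (intro conjI allI impI)
    fix x assume "A x = 0 \<and> B x = 0 \<and> C x = 0"
    then have "D (C x) = D 0" by simp
    then show "x = 0" by (simp only: DC blinfun.zero_right)
  next
    fix u v w assume h: "B u - A v = 0 \<and> C u - A w = 0 \<and> C v - B w = 0"
    show "\<exists>x. u = A x \<and> v = B x \<and> w = C x"
    proof (intro exI conjI)
      have e1: "C u = A w" "B u = A v" "C v = B w" using h by auto
      show "u = A (D w)" by (simp add: AD DC flip: e1(1))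
      show "v = B (D w)" by (simp add: BD DC flip: e1(3))
      show "w = C (D w)" by (simp add: CD)
    qed
  next
    fix p q r assume h: "C p - B q + A r = 0"
    have "B (D q) - A (D r) = D (B q - A r)" by (simp add: AD BD blinfun.diff_right)
    also have "B q - A r = C p" using h by (simp add: algebra_simps)
    finally have "p = B (D q) - A (D r)" by (simp add: DC)
    then show "\<exists>u v w. p = B u - A v \<and> q = C u - A w \<and> r = C v - B w"
      by (intro exI[of _ "D q"] exI[of _ "D r"] exI[of _ 0]) (simp add: CD)
  next
    fix s show "\<exists>p q r. s = C p - B q + A r"
      by (intro exI[of _ "D s"] exI[of _ 0]) (simp add: CD)
  qed
qed

lemma koszul3_zero:
  fixes A B :: "'h::real_normed_vector \<Rightarrow>\<^sub>L 'h"
  assumes "koszul_exact2 (blinfun_apply A) (blinfun_apply B)"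
  shows "koszul_exact3 (blinfun_apply A) (blinfun_apply B) (\<lambda>x. 0)"
proof -
  have k1: "\<And>x. A x = 0 \<Longrightarrow> B x = 0 \<Longrightarrow> x = 0"
    and k2: "\<And>y z. B y - A z = 0 \<Longrightarrow> \<exists>x. y = A x \<and> z = B x"
    and k3: "\<And>w. \<exists>y z. w = B y - A z"
    using assms unfolding koszul_exact2_def by blast+
  show ?thesis unfolding koszul_exact3_def
  proof (intro conjI allI impI)
    fix x assume "A x = 0 \<and> B x = 0 \<and> 0 = (0::'h)"
    then show "x = 0" using k1[of x] by blast
  next
    fix u v w assume h: "B u - A v = 0 \<and> 0 - A w = 0 \<and> 0 - B w = 0"
    then have w0: "w = 0" using k1[of w] by simp
    from h have "B u - A v = 0" by simp
    then obtain x where "u = A x" "v = B x" using k2 by blast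
    then show "\<exists>x. u = A x \<and> v = B x \<and> w = 0" using w0 by blast
  next
    fix p q r assume h: "0 - B q + A r = 0"
    then have "B q - A r = 0" by (simp add: algebra_simps)
    then obtain x where x: "q = A x" "r = B x" using k2 by blast
    obtain u v where uv: "p = B u - A v" using k3 by blast
    show "\<exists>u v w. p = B u - A v \<and> q = 0 - A w \<and> r = 0 - B w"
      by (rule exI[where x=u], rule exI[where x=v], rule exI[where x="-x"]) (simp add: uv x blinfun.minus_right)
  next
    fix s obtain y z where syz: "s = B y - A z" using k3 by blast
    have "s = 0 - B (-y) + A (-z)" by (simp add: syz blinfun.minus_right)
    then show "\<exists>p q r. s = 0 - B q + A r" by blast
  qed
qed


definition Mr :: "complex \<Rightarrow> complex \<Rightarrow> complex^2^2" where
  "Mr a s = (\<chi> i j. if j = 1 then (if i = 1 then s else a) else 0)"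

lemma Mr_norm:
  assumes "(cmod a)\<^sup>2 + (cmod s)\<^sup>2 < 1"
  shows "mat_norm2 (Mr a s) < 1"
proof -
  define r where "r = sqrt ((cmod a)\<^sup>2 + (cmod s)\<^sup>2)"
  have r1: "r < 1" using assms by (simp add: r_def)
  have "norm (Mr a s *v x) \<le> r * norm x" for x
  proof -
    have "Mr a s *v x = (\<chi> i. (if i = 1 then s else a) * x $ 1)"
      by (simp add: Mr_def matrix_vector_mult_def vec_eq_iff sum_2)
    then have "norm (Mr a s *v x) = sqrt ((cmod s * cmod (x$1))\<^sup>2 + (cmod a * cmod (x$1))\<^sup>2)"
      by (simp add: norm_vec_def L2_set_def sum_2 norm_mult)
    also have "\<dots> = r * cmod (x$1)"
    proof -
      have "(cmod s * cmod (x$1))\<^sup>2 + (cmod a * cmod (x$1))\<^sup>2 = ((cmod a)\<^sup>2 + (cmod s)\<^sup>2) * (cmod (x$1))\<^sup>2"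
        by (simp add: power_mult_distrib algebra_simps)
      then show ?thesis by (simp add: r_def real_sqrt_mult)
    qed
    also have "\<dots> \<le> r * norm x" by (intro mult_left_mono Finite_Cartesian_Product.norm_nth_le) (simp add: r_def)
    finally show ?thesis .
  qed
  then have "mat_norm2 (Mr a s) \<le> r" unfolding mat_norm2_def by (rule onorm_le)
  with r1 show ?thesis by simp
qed

lemma ball_in_penta:
  assumes "(a, s) \<in> closed_ball2"
  shows "(a, s, 0) \<in> closure pentablock"
proof -
  define f where "f n = (1 - 1 / real (n + 2)) *\<^sub>R (a, s, 0::complex)" for n :: nat
  have "f n \<in> pentablock" for n
  proof -
    define c where "c = 1 - 1 / real (n + 2)"
    have c0: "0 \<le> c" "c < 1" by (auto simp: c_def field_simps)
    have "(cmod a)\<^sup>2 + (cmod s)\<^sup>2 \<le> 1" using assms by (simp add: closed_ball2_def)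
    have "(cmod (c *\<^sub>R a))\<^sup>2 + (cmod (c *\<^sub>R s))\<^sup>2 = c\<^sup>2 * ((cmod a)\<^sup>2 + (cmod s)\<^sup>2)"
      using c0 by (simp add: power_mult_distrib algebra_simps)
    also have "\<dots> \<le> c\<^sup>2" using \<open>_ \<le> 1\<close> c0 by (simp add: mult_left_le)
    also have "\<dots> < 1" using c0 by (simp add: power_less_one_iff)
    finally have "mat_norm2 (Mr (c *\<^sub>R a) (c *\<^sub>R s)) < 1" by (rule Mr_norm)
    moreover have "f n = (Mr (c *\<^sub>R a) (c *\<^sub>R s) $ 2 $ 1,
        Mr (c *\<^sub>R a) (c *\<^sub>R s) $ 1 $ 1 + Mr (c *\<^sub>R a) (c *\<^sub>R s) $ 2 $ 2, det (Mr (c *\<^sub>R a) (c *\<^sub>R s)))"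
      by (simp add: f_def c_def Mr_def det_2)
    ultimately show ?thesis unfolding pentablock_def by blast
  qed
  moreover have "f \<longlonglongrightarrow> (1 - 0) *\<^sub>R (a, s, 0)"
  proof -
    have "(\<lambda>n. 1 / real (n + 2)) \<longlonglongrightarrow> 0"
      using LIMSEQ_ignore_initial_segment[OF lim_1_over_n, of 2] by simp
    then show ?thesis unfolding f_def by (intro tendsto_intros)
  qed
  ultimately show ?thesis unfolding closure_sequential by auto
qed


lemma entry_le:
  fixes A :: "complex^2^2"
  assumes "mat_norm2 A < 1"
  shows "cmod (A $ i $ j) \<le> 1"
proof -
  have "\<forall>j::2. norm (axis j (1::complex)) = 1"
    by (simp add: forall_2 norm_vec_def L2_set_def axis_def UNIV_2)
  then have ax: "norm (axis j (1::complex)) = 1" by blast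
  have "(A *v axis j 1) $ i = A $ i $ j"
    by (simp add: matrix_vector_mult_def axis_def if_distrib cong: if_cong)
  then have "cmod (A $ i $ j) \<le> norm (A *v axis j 1)" by (metis Finite_Cartesian_Product.norm_nth_le)
  also have "\<dots> \<le> mat_norm2 A * norm (axis j (1::complex))"
    unfolding mat_norm2_def by (rule onorm) simp
  finally show ?thesis using assms ax by simp
qed

lemma bounded_penta: "bounded pentablock"
proof -
  have "norm x \<le> 5" if xin: "x \<in> pentablock" for x
  proof -
    obtain A where A: "x = (A $ 2 $ 1, A $ 1 $ 1 + A $ 2 $ 2, det A)" "mat_norm2 A < 1"
      using xin unfolding pentablock_def by blast
    note e = entry_le[OF A(2)]
    have "norm (A $ 1 $ 1 + A $ 2 $ 2) \<le> 2" using e[of 1 1] e[of 2 2] norm_triangle_ineq[of "A$1$1" "A$2$2"] by simp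
    moreover have "norm (det A) \<le> 2"
    proof -
      have "norm (det A) \<le> norm (A$1$1 * A$2$2) + norm (A$1$2 * A$2$1)"
        unfolding det_2 by (rule norm_triangle_ineq4)
      also have "\<dots> \<le> 1 * 1 + 1 * 1" unfolding norm_mult
        by (intro add_mono mult_mono e) auto
      finally show ?thesis by simp
    qed
    moreover have "norm x \<le> norm (A $ 2 $ 1) + (norm (A $ 1 $ 1 + A $ 2 $ 2) + norm (det A))"
      unfolding A(1) by (meson add_left_mono norm_Pair_le order_trans)
    ultimately show ?thesis using e[of 2 1] by simp
  qed
  then show ?thesis unfolding bounded_iff by blast
qed

lemma compose_id_right: "X o\<^sub>L id_blinfun = X"
  by (rule blinfun_eqI) simp

lemma op_pow_0: "op_pow T 0 = id_blinfun"
  by (simp add: op_pow_def)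

lemma op_pow_zero_Suc: "op_pow 0 (Suc n) = 0"
  by (simp add: op_pow_def)

lemma sum_k0:
  fixes F :: "nat \<times> nat \<times> nat \<Rightarrow> 'a::comm_monoid_add"
  assumes fin: "finite {m. p m \<noteq> 0}" and z: "\<And>i j k. k > 0 \<Longrightarrow> F (i,j,k) = 0"
  shows "(\<Sum>m\<in>{m. p m \<noteq> 0}. F m) = (\<Sum>ij\<in>{ij. p (fst ij, snd ij, 0) \<noteq> 0}. F (fst ij, snd ij, 0))"
proof -
  let ?h = "\<lambda>ij::nat\<times>nat. (fst ij, snd ij, 0::nat)"
  have "(\<Sum>m\<in>{m. p m \<noteq> 0}. F m) = (\<Sum>m\<in>?h ` {ij. p (fst ij, snd ij, 0) \<noteq> 0}. F m)"
  proof (rule sum.mono_neutral_right[OF fin])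
    show "?h ` {ij. p (fst ij, snd ij, 0) \<noteq> 0} \<subseteq> {m. p m \<noteq> 0}" by auto
    show "\<forall>m\<in>{m. p m \<noteq> 0} - ?h ` {ij. p (fst ij, snd ij, 0) \<noteq> 0}. F m = 0"
    proof
      fix m assume m: "m \<in> {m. p m \<noteq> 0} - ?h ` {ij. p (fst ij, snd ij, 0) \<noteq> 0}"
      obtain i j k where mm: "m = (i,j,k)" by (cases m) auto
      have "k \<noteq> 0"
      proof
        assume k0: "k = 0"
        have "m \<in> ?h ` {ij. p (fst ij, snd ij, 0) \<noteq> 0}"
          using m unfolding mm k0 by (intro image_eqI[of _ _ "(i,j)"]) auto
        then show False using m by blast
      qed
      then show "F m = 0" using z mm by simp
    qed
  qed
  also have "\<dots> = (\<Sum>ij\<in>{ij. p (fst ij, snd ij, 0) \<noteq> 0}. F (?h ij))"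
    by (subst sum.reindex) (auto simp: inj_on_def prod_eq_iff)
  finally show ?thesis .
qed

lemma poly3_op_red:
  assumes "finite {m. p m \<noteq> 0}"
  shows "poly3_op J p A S 0 = poly2_op J (\<lambda>ij. p (fst ij, snd ij, 0)) A S"
  unfolding poly3_op_def poly2_op_def
  apply (subst sum_k0[OF assms])
   apply (auto simp: gr0_conv_Suc op_pow_zero_Suc)[1]
  apply (simp add: op_pow_0 case_prod_beta compose_id_right)
  done

lemma poly3_eval_red:
  assumes "finite {m. p m \<noteq> 0}"
  shows "poly3_eval p (a, s, 0) = poly2_eval (\<lambda>ij. p (fst ij, snd ij, 0)) (a, s)"
  unfolding poly3_eval_def poly2_eval_def
  apply (subst sum_k0[OF assms])
   apply (auto)[1]
  apply (simp add: case_prod_beta)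
  done

lemma poly3_eval_cont: "continuous_on X (poly3_eval p)"
  unfolding poly3_eval_def case_prod_beta
  by (intro continuous_intros)


lemma shift_comm:
  assumes "complex_structure J" "clinear_op J T"
  shows "(T - cscal J z1) (cscal J w x) = cscal J w ((T - cscal J z1) x)"
proof -
  have 1: "T (cscal J w x) = cscal J w (T x)"
    using cscal_comm[OF assms(2), of w] by (metis blinfun_apply_blinfun_compose)
  have 2: "cscal J z1 (cscal J w x) = cscal J w (cscal J z1 x)"
    using cscal_mult[OF assms(1), of z1 w] cscal_mult[OF assms(1), of w z1]
    by (metis blinfun_apply_blinfun_compose mult.commute)
  show ?thesis by (simp add: blinfun.diff_left blinfun.diff_right 1 2)
qed

theorem mainTheorem13:
  fixes J A S :: "'h::{real_inner,complete_space} \<Rightarrow>\<^sub>L 'h"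
  assumes "complex_structure J"
    and "B2_contraction J A S"
  shows "P_contraction J A S 0"
proof -
  have cJ: "complex_structure J" by fact
  from assms(2) have cp: "commuting_pair J A S" and sp: "spectral_set2 closed_ball2 J A S"
    unfolding B2_contraction_def by auto
  from cp have lA: "clinear_op J A" and lS: "clinear_op J S" and AS: "A o\<^sub>L S = S o\<^sub>L A"
    unfolding commuting_pair_def by auto
  have ct: "commuting_triple J A S 0"
    using lA lS AS unfolding commuting_triple_def clinear_op_def by simp
  have spec: "taylor_spectrum3 J A S 0 \<subseteq> closure pentablock"
  proof
    fix z assume zin: "z \<in> taylor_spectrum3 J A S 0"
    obtain z1 z2 z3 where zz: "z = (z1, z2, z3)" by (cases z) auto
    have nk: "\<not> koszul_exact3 (blinfun_apply (A - cscal J z1))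
        (blinfun_apply (S - cscal J z2)) (blinfun_apply (0 - cscal J z3))"
      using zin unfolding zz taylor_spectrum3_def by simp
    show "z \<in> closure pentablock"
    proof (cases "z3 = 0")
      case False
      have CD: "(0 - cscal J z3) ((- cscal J (inverse z3)) x) = x" for x
      proof -
        have "(0 - cscal J z3) ((- cscal J (inverse z3)) x) = cscal J z3 (cscal J (inverse z3) x)"
          by (simp add: blinfun.minus_left blinfun.diff_left blinfun.minus_right)
        also have "\<dots> = (cscal J z3 o\<^sub>L cscal J (inverse z3)) x" by simp
        also have "\<dots> = x" using cscal_mult[OF cJ, of z3 "inverse z3"] False by (simp add: cscal_one)
        finally show ?thesis .
      qed
      have DC: "(- cscal J (inverse z3)) ((0 - cscal J z3) x) = x" for x
      proof -
        have "(- cscal J (inverse z3)) ((0 - cscal J z3) x) = cscal J (inverse z3) (cscal J z3 x)"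
          by (simp add: blinfun.minus_left blinfun.diff_left blinfun.minus_right)
        also have "\<dots> = (cscal J (inverse z3) o\<^sub>L cscal J z3) x" by simp
        also have "\<dots> = x" using cscal_mult[OF cJ, of "inverse z3" z3] False by (simp add: cscal_one)
        finally show ?thesis .
      qed
      have AC: "(A - cscal J z1) ((0 - cscal J z3) x) = (0 - cscal J z3) ((A - cscal J z1) x)" for x
        using shift_comm[OF cJ lA, of z1 z3 x] by (simp add: blinfun.minus_right blinfun.minus_left)
      have BC: "(S - cscal J z2) ((0 - cscal J z3) x) = (0 - cscal J z3) ((S - cscal J z2) x)" for x
        using shift_comm[OF cJ lS, of z2 z3 x] by (simp add: blinfun.minus_right blinfun.minus_left)
      from nk koszul3_inv[OF CD DC AC BC] show ?thesis by contradiction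
    next
      case True
      have "\<not> koszul_exact2 (blinfun_apply (A - cscal J z1)) (blinfun_apply (S - cscal J z2))"
      proof
        assume "koszul_exact2 (blinfun_apply (A - cscal J z1)) (blinfun_apply (S - cscal J z2))"
        from koszul3_zero[OF this] have "koszul_exact3 (blinfun_apply (A - cscal J z1))
          (blinfun_apply (S - cscal J z2)) (blinfun_apply (0 - cscal J z3))"
          using True by (simp add: cscal_zero zero_blinfun.rep_eq)
        with nk show False by contradiction
      qed
      then have "(z1, z2) \<in> taylor_spectrum2 J A S" unfolding taylor_spectrum2_def by simp
      then have "(z1, z2) \<in> closed_ball2" using sp unfolding spectral_set2_def by (auto dest: conjunct1)
      then show ?thesis using ball_in_penta True zz by simp
    qed
  qed
  have rat: "\<exists>R. R o\<^sub>L poly3_op J q A S 0 = id_blinfun \<and> poly3_op J q A S 0 o\<^sub>L R = id_blinfun \<and>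
             norm (poly3_op J p A S 0 o\<^sub>L R) \<le> (SUP z\<in>closure pentablock. cmod (poly3_eval p z / poly3_eval q z))"
    if fp: "finite {k. p k \<noteq> 0}" and fq: "finite {k. q k \<noteq> 0}"
      and qnz: "\<forall>z\<in>closure pentablock. poly3_eval q z \<noteq> 0" for p q
  proof -
    define p' where "p' = (\<lambda>ij. p (fst ij, snd ij, 0))"
    define q' where "q' = (\<lambda>ij. q (fst ij, snd ij, 0))"
    have inj: "inj (\<lambda>ij::nat\<times>nat. (fst ij, snd ij, 0::nat))" by (auto simp: inj_on_def prod_eq_iff)
    have fp': "finite {k. p' k \<noteq> 0}"
      using finite_vimageI[OF fp inj] unfolding p'_def by (simp add: vimage_def)
    have fq': "finite {k. q' k \<noteq> 0}"
      using finite_vimageI[OF fq inj] unfolding q'_def by (simp add: vimage_def)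
    have ev: "poly3_eval c (fst z, snd z, 0) = poly2_eval (\<lambda>ij. c (fst ij, snd ij, 0)) z"
      if "finite {k. c k \<noteq> 0}" for c and z :: "complex \<times> complex"
      using poly3_eval_red[OF that, of "fst z" "snd z"] by simp
    have inP: "(fst z, snd z, 0) \<in> closure pentablock" if "z \<in> closed_ball2" for z
      using ball_in_penta[of "fst z" "snd z"] that by simp
    have q'nz: "\<forall>z\<in>closed_ball2. poly2_eval q' z \<noteq> 0"
    proof
      fix z assume zb: "z \<in> closed_ball2"
      have "poly2_eval q' z = poly3_eval q (fst z, snd z, 0)" unfolding q'_def by (rule ev[OF fq, symmetric])
      then show "poly2_eval q' z \<noteq> 0" using qnz inP[OF zb] by simp
    qed
    have sp2: "\<forall>p q. finite {k. p k \<noteq> 0} \<and> finite {k. q k \<noteq> 0} \<and> (\<forall>z\<in>closed_ball2. poly2_eval q z \<noteq> 0) \<longrightarrow>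
        (\<exists>R. R o\<^sub>L poly2_op J q A S = id_blinfun \<and> poly2_op J q A S o\<^sub>L R = id_blinfun \<and>
             norm (poly2_op J p A S o\<^sub>L R) \<le> (SUP z\<in>closed_ball2. cmod (poly2_eval p z / poly2_eval q z)))"
      using sp unfolding spectral_set2_def by (rule conjunct2)
    obtain R where R: "R o\<^sub>L poly2_op J q' A S = id_blinfun" "poly2_op J q' A S o\<^sub>L R = id_blinfun"
      "norm (poly2_op J p' A S o\<^sub>L R) \<le> (SUP z\<in>closed_ball2. cmod (poly2_eval p' z / poly2_eval q' z))"
      using sp2[rule_format, OF conjI[OF fp' conjI[OF fq' q'nz]]] by (elim exE conjE) (rule that)
    have opq: "poly3_op J q A S 0 = poly2_op J q' A S" unfolding q'_def by (rule poly3_op_red[OF fq])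
    have opp: "poly3_op J p A S 0 = poly2_op J p' A S" unfolding p'_def by (rule poly3_op_red[OF fp])
    let ?g = "\<lambda>z. cmod (poly3_eval p z / poly3_eval q z)"
    have bdd: "bdd_above (?g ` closure pentablock)"
    proof -
      have "compact (closure pentablock)" using bounded_penta by (simp add: compact_closure)
      moreover have "continuous_on (closure pentablock) ?g"
        using qnz by (intro continuous_intros poly3_eval_cont) auto
      ultimately have "compact (?g ` closure pentablock)" by (metis compact_continuous_image)
      then show ?thesis by (simp add: bounded_imp_bdd_above compact_imp_bounded)
    qed
    have ne: "closed_ball2 \<noteq> {}" unfolding closed_ball2_def by (auto intro!: exI[of _ 0])
    have "(SUP z\<in>closed_ball2. cmod (poly2_eval p' z / poly2_eval q' z)) \<le> (SUP z\<in>closure pentablock. ?g z)"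
    proof (rule cSUP_mono[OF ne bdd])
      fix z assume "z \<in> closed_ball2"
      show "\<exists>m\<in>closure pentablock. cmod (poly2_eval p' z / poly2_eval q' z) \<le> ?g m"
      proof (rule bexI[of _ "(fst z, snd z, 0)"])
        show "(fst z, snd z, 0) \<in> closure pentablock" by (rule inP) fact
        have "poly2_eval p' z = poly3_eval p (fst z, snd z, 0)" unfolding p'_def by (rule ev[OF fp, symmetric])
        moreover have "poly2_eval q' z = poly3_eval q (fst z, snd z, 0)" unfolding q'_def by (rule ev[OF fq, symmetric])
        ultimately show "cmod (poly2_eval p' z / poly2_eval q' z) \<le> ?g (fst z, snd z, 0)" by simp
      qed
    qed
    then have "norm (poly3_op J p A S 0 o\<^sub>L R) \<le> (SUP z\<in>closure pentablock. ?g z)"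
      using R(3) unfolding opp by (rule order_trans[rotated])
    moreover have "R o\<^sub>L poly3_op J q A S 0 = id_blinfun" "poly3_op J q A S 0 o\<^sub>L R = id_blinfun"
      unfolding opq by (fact R(1), fact R(2))
    ultimately show ?thesis by (intro exI[of _ R] conjI)
  qed
  show ?thesis unfolding P_contraction_def spectral_set3_def
  proof (intro conjI allI impI)
    show "commuting_triple J A S 0" by (fact ct)
    show "taylor_spectrum3 J A S 0 \<subseteq> closure pentablock" by (fact spec)
  next
    fix p q :: "nat \<times> nat \<times> nat \<Rightarrow> complex" assume h: "finite {k. p k \<noteq> 0} \<and> finite {k. q k \<noteq> 0} \<and> (\<forall>z\<in>closure pentablock. poly3_eval q z \<noteq> 0)"
    then show "\<exists>R. R o\<^sub>L poly3_op J q A S 0 = id_blinfun \<and> poly3_op J q A S 0 o\<^sub>L R = id_blinfun \<and>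
             norm (poly3_op J p A S 0 o\<^sub>L R) \<le> (SUP z\<in>closure pentablock. cmod (poly3_eval p z / poly3_eval q z))"
      using h by (intro rat) auto
  qed
qed

end
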